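(* For any American option $\xi$, \[ \{x\in\mathbb{R}^d : \exists Y\in\Phi^{\mathrm{ag}}(\xi),\ x=Y_0\}=\{x\in\mathbb{R}^d:\exists y\in\Phi^{\mathrm{ad}}(\xi),\ x=y_0\}. \]
   Context: Finite filtered probability space $(\Omega,\mathcal{F},\mathbb{P};(\mathcal{F}_t)_{t=0}^T)$ with $\mathcal{F}_0$ trivial, $\mathcal{F}_T=2^\Omega$, $\mathbb{P}(\{\omega\})>0$. $\mathcal{L}_t$: $\mathcal{F}_t$-measurable $\mathbb{R}^d$-valued random variables. $d$ assets with $\mathcal{F}_t$-measurable exchange rates $\pi^{jk}_t>0$, $\pi^{jj}_t=1$. Solvency cone $\mathcal{K}_t$: the set of $x\in\mathcal{L}_t$ with $x(\omega)$ in the convex cone generated by $e^1,\ldots,e^d$ and $\pi^{jk}_t(\omega)e^j-e^k$ for every $\omega$. Deferred solvency cone $\mathcal{Q}_t$: the set of $z\in\mathcal{L}_t$ for which there exist $y_{t+1},\ldots,y_{T+1}$, $y_s\in\mathcal{L}_{s-1}$, $y_{T+1}=0$, with $z-y_{t+1}\in\mathcal{K}_t$ and $y_s-y_{s+1}\in\mathcal{K}_s$ for $s=t+1,\ldots,T$. A trading strategy is $y=(y_t)_{t=0}^{T+1}$ with $y_0\in\mathbb{R}^d$, $y_t\in\mathcal{L}_{t-1}$ for $t=1,\ldots,T$, $y_{T+1}=0$; $\Phi$ is the set of trading strategies. A mixed stopping time is an adapted $[0,1]$-valued process $\chi=(\chi_t)_{t=0}^T$ with $\sum_{t=0}^T\chi_t=1$;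 $\mathcal{X}$ is the set of them. $\mathcal{T}$ is the set of stopping times with values in $\{0,\ldots,T\}$. An American option is an adapted $\mathbb{R}^d$-valued process $\xi=(\xi_t)_{t=0}^T$. $\Phi^{\mathrm{ag}}(\xi)$ is the set of maps $Y:\mathcal{X}\to\Phi$, $\chi\mapsto Y^\chi$, such that (i) $Y^\chi_t-\chi_t\xi_t-Y^\chi_{t+1}\in\mathcal{K}_t$ for all $\chi\in\mathcal{X}$ and $t=0,\ldots,T$; (ii) for all $\chi,\chi'\in\mathcal{X}$, $t$ and $\omega$: if $\chi_s(\omega)=\chi'_s(\omega)$ for $s=0,\ldots,t-1$ then $Y^\chi_t(\omega)=Y^{\chi'}_t(\omega)$. In particular $Y^\chi_0$ does not depend on $\chi$; it is denoted $Y_0$. $\Phi^{\mathrm{ad}}(\xi)$ is the set of $y\in\Phi$ such that for all $\tau\in\mathcal{T}$: $y_t-y_{t+1}\in\mathcal{Q}_t$ for $t=0,\ldots,\tau-1$ and $y_\tau-\xi_\tau\in\mathcal{Q}_\tau$. Standing assumption: the model admits no arbitrage (no $y\in\Phi$ with $y_0=0$, $y_t-y_{t+1}\in\mathcal{K}_t$ for $t<T$, and $y_T-x\in\mathcal{K}_T$ for some nonzero componentwise non-negative $x\in\mathcal{L}_T$). *)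

theory Defs
  imports "HOL-Probability.Probability"
begin

text \<open>
Omega = UNIV of a finite type 'w; assets are indexed by a finite type 'd, so R^d = real^'d.
  Exchange rates pi t w j k (the rate pi^{jk}_t(w)).
\<close>

definition market_model ::
  "('w::finite \<Rightarrow> real) \<Rightarrow> (nat \<Rightarrow> 'w measure) \<Rightarrow> (nat \<Rightarrow> 'w \<Rightarrow> 'd::finite \<Rightarrow> 'd \<Rightarrow> real) \<Rightarrow> nat \<Rightarrow> bool"
  where
  "market_model P F \<pi> T \<longleftrightarrow>
     (\<forall>w. P w > 0) \<and> (\<Sum>w\<in>UNIV. P w) = 1 \<and>
     (\<forall>t\<le>T. space (F t) = UNIV) \<and>
     (\<forall>s t. s \<le> t \<and> t \<le> T \<longrightarrow> sets (F s) \<subseteq> sets (F t)) \<and>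
     sets (F 0) = {{}, UNIV} \<and> sets (F T) = Pow UNIV \<and>
     (\<forall>t\<le>T. \<forall>j k. (\<lambda>w. \<pi> t w j k) \<in> borel_measurable (F t)) \<and>
     (\<forall>t\<le>T. \<forall>w j k. \<pi> t w j k > 0) \<and>
     (\<forall>t\<le>T. \<forall>w j. \<pi> t w j j = 1)"

definition Lset :: "(nat \<Rightarrow> 'w measure) \<Rightarrow> nat \<Rightarrow> ('w \<Rightarrow> real^'d::finite) set" where
  "Lset F t = borel_measurable (F t)"

definition solv_cone :: "(nat \<Rightarrow> 'w \<Rightarrow> 'd::finite \<Rightarrow> 'd \<Rightarrow> real) \<Rightarrow> nat \<Rightarrow> 'w \<Rightarrow> (real^'d) set" where
  "solv_cone \<pi> t w = convex_cone hull
     ({axis j 1 | j. True} \<union> {\<pi> t w j k *\<^sub>R axis j 1 - axis k 1 | j k. True})"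

definition Kset :: "(nat \<Rightarrow> 'w measure) \<Rightarrow> (nat \<Rightarrow> 'w \<Rightarrow> 'd::finite \<Rightarrow> 'd \<Rightarrow> real) \<Rightarrow> nat \<Rightarrow> ('w \<Rightarrow> real^'d) set" where
  "Kset F \<pi> t = {x \<in> Lset F t. \<forall>w. x w \<in> solv_cone \<pi> t w}"

definition Qset :: "(nat \<Rightarrow> 'w measure) \<Rightarrow> (nat \<Rightarrow> 'w \<Rightarrow> 'd::finite \<Rightarrow> 'd \<Rightarrow> real) \<Rightarrow> nat \<Rightarrow> nat \<Rightarrow> ('w \<Rightarrow> real^'d) set" where
  "Qset F \<pi> T t = {z \<in> Lset F t. \<exists>y :: nat \<Rightarrow> 'w \<Rightarrow> real^'d.
      (\<forall>s. t + 1 \<le> s \<and> s \<le> T + 1 \<longrightarrow> y s \<in> Lset F (s - 1)) \<and>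
      y (T + 1) = (\<lambda>w. 0) \<and>
      (\<lambda>w. z w - y (t + 1) w) \<in> Kset F \<pi> t \<and>
      (\<forall>s. t + 1 \<le> s \<and> s \<le> T \<longrightarrow> (\<lambda>w. y s w - y (s + 1) w) \<in> Kset F \<pi> s)}"

text \<open>Trading strategies Phi: y_0 deterministic (a constant in R^d), y_t in L_{t-1} for t = 1..T,
  y_{T+1} = 0; the (meaningless) values at times > T+1 are normalised to 0.\<close>
definition strategies :: "(nat \<Rightarrow> 'w measure) \<Rightarrow> nat \<Rightarrow> (nat \<Rightarrow> 'w \<Rightarrow> real^'d::finite) set" where
  "strategies F T = {y. (\<exists>c. y 0 = (\<lambda>w. c)) \<and>
      (\<forall>t. 1 \<le> t \<and> t \<le> T \<longrightarrow> y t \<in> Lset F (t - 1)) \<and>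
      (\<forall>t. t \<ge> T + 1 \<longrightarrow> y t = (\<lambda>w. 0))}"

definition mixed_stopping_times :: "(nat \<Rightarrow> 'w measure) \<Rightarrow> nat \<Rightarrow> (nat \<Rightarrow> 'w \<Rightarrow> real) set" where
  "mixed_stopping_times F T = {ch.
      (\<forall>t\<le>T. ch t \<in> borel_measurable (F t)) \<and>
      (\<forall>t\<le>T. \<forall>w. 0 \<le> ch t w \<and> ch t w \<le> 1) \<and>
      (\<forall>w. (\<Sum>t\<le>T. ch t w) = 1) \<and>
      (\<forall>t>T. ch t = (\<lambda>w. 0))}"

definition stopping_times :: "(nat \<Rightarrow> 'w measure) \<Rightarrow> nat \<Rightarrow> ('w \<Rightarrow> nat) set" where
  "stopping_times F T = {\<tau>. (\<forall>w. \<tau> w \<le> T) \<and> (\<forall>t\<le>T. {w. \<tau> w = t} \<in> sets (F t))}"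

definition american_option :: "(nat \<Rightarrow> 'w measure) \<Rightarrow> nat \<Rightarrow> (nat \<Rightarrow> 'w \<Rightarrow> real^'d::finite) \<Rightarrow> bool" where
  "american_option F T \<xi> \<longleftrightarrow> (\<forall>t\<le>T. \<xi> t \<in> Lset F t)"

definition no_arbitrage :: "(nat \<Rightarrow> 'w measure) \<Rightarrow> (nat \<Rightarrow> 'w \<Rightarrow> 'd::finite \<Rightarrow> 'd \<Rightarrow> real) \<Rightarrow> nat \<Rightarrow> bool" where
  "no_arbitrage F \<pi> T \<longleftrightarrow> \<not> (\<exists>y \<in> strategies F T. \<exists>x \<in> Lset F T.
      y 0 = (\<lambda>w. 0) \<and>
      (\<forall>t<T. (\<lambda>w. y t w - y (t + 1) w) \<in> Kset F \<pi> t) \<and>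
      (\<lambda>w. y T w - x w) \<in> Kset F \<pi> T \<and>
      x \<noteq> (\<lambda>w. 0) \<and> (\<forall>w i. 0 \<le> x w $ i))"

definition Phi_ag :: "(nat \<Rightarrow> 'w measure) \<Rightarrow> (nat \<Rightarrow> 'w \<Rightarrow> 'd::finite \<Rightarrow> 'd \<Rightarrow> real) \<Rightarrow> nat \<Rightarrow>
    (nat \<Rightarrow> 'w \<Rightarrow> real^'d) \<Rightarrow> ((nat \<Rightarrow> 'w \<Rightarrow> real) \<Rightarrow> (nat \<Rightarrow> 'w \<Rightarrow> real^'d)) set" where
  "Phi_ag F \<pi> T \<xi> = {Y.
      (\<forall>ch \<in> mixed_stopping_times F T. Y ch \<in> strategies F T) \<and>
      (\<forall>ch \<in> mixed_stopping_times F T. \<forall>t\<le>T.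
          (\<lambda>w. Y ch t w - ch t w *\<^sub>R \<xi> t w - Y ch (t + 1) w) \<in> Kset F \<pi> t) \<and>
      (\<forall>ch \<in> mixed_stopping_times F T. \<forall>ch' \<in> mixed_stopping_times F T. \<forall>t\<le>T + 1. \<forall>w.
          (\<forall>s<t. ch s w = ch' s w) \<longrightarrow> Y ch t w = Y ch' t w)}"

text \<open>Phi^ad(xi). For a stopping time tau, "y_t - y_{t+1} in Q_t for t < tau" and
  "y_tau - xi_tau in Q_tau" are read on the events {t < tau}, {tau = t} (which lie in F_t).\<close>
definition Phi_ad :: "(nat \<Rightarrow> 'w measure) \<Rightarrow> (nat \<Rightarrow> 'w \<Rightarrow> 'd::finite \<Rightarrow> 'd \<Rightarrow> real) \<Rightarrow> nat \<Rightarrow>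
    (nat \<Rightarrow> 'w \<Rightarrow> real^'d) \<Rightarrow> (nat \<Rightarrow> 'w \<Rightarrow> real^'d) set" where
  "Phi_ad F \<pi> T \<xi> = {y \<in> strategies F T. \<forall>\<tau> \<in> stopping_times F T. \<forall>t\<le>T.
      (\<lambda>w. if t < \<tau> w then y t w - y (t + 1) w else 0) \<in> Qset F \<pi> T t \<and>
      (\<lambda>w. if \<tau> w = t then y t w - \<xi> t w else 0) \<in> Qset F \<pi> T t}"

end

theory Submission
  imports Defs
begin

lemma sc_0: "0 \<in> solv_cone \<pi> t w"
  unfolding solv_cone_def by (rule convex_cone_hull_contains_0)
lemma sc_add: "x \<in> solv_cone \<pi> t w \<Longrightarrow> y \<in> solv_cone \<pi> t w \<Longrightarrow> x + y \<in> solv_cone \<pi> t w"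
  unfolding solv_cone_def by (rule convex_cone_hull_add)
lemma sc_mul: "x \<in> solv_cone \<pi> t w \<Longrightarrow> 0 \<le> c \<Longrightarrow> c *\<^sub>R x \<in> solv_cone \<pi> t w"
  unfolding solv_cone_def by (rule convex_cone_hull_mul)
lemma sc_sum: "finite S \<Longrightarrow> (\<And>i. i \<in> S \<Longrightarrow> f i \<in> solv_cone \<pi> t w) \<Longrightarrow> (\<Sum>i\<in>S. f i) \<in> solv_cone \<pi> t w"
  by (induction S rule: finite_induct) (auto intro: sc_0 sc_add)

lemma mm_sp: "market_model P F \<pi> T \<Longrightarrow> \<forall>t\<le>T. space (F t) = UNIV"
  unfolding market_model_def by (elim conjE)
lemma mm_mono: "market_model P F \<pi> T \<Longrightarrow> \<forall>s t. s \<le> t \<and> t \<le> T \<longrightarrow> sets (F s) \<subseteq> sets (F t)"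
  unfolding market_model_def by (elim conjE)

lemma mm_space: "market_model P F \<pi> T \<Longrightarrow> t \<le> T \<Longrightarrow> space (F t) = UNIV"
  using mm_sp by blast

lemma mm_sub:
  assumes "market_model P F \<pi> T" "s \<le> t" "t \<le> T" "f \<in> borel_measurable (F s)"
  shows "f \<in> borel_measurable (F t)"
proof (rule measurable_from_subalg[OF _ assms(4)])
  have "space (F t) = UNIV" "space (F s) = UNIV" "sets (F s) \<subseteq> sets (F t)"
    using mm_space[OF assms(1)] mm_mono[OF assms(1)] assms(2,3) by auto
  then show "subalgebra (F t) (F s)" unfolding subalgebra_def by simp
qed

lemma K_if:
  assumes "f \<in> Kset F \<pi> t" "A \<in> sets (F t)" "space (F t) = UNIV"
  shows "(\<lambda>w. if w \<in> A then f w else 0) \<in> Kset F \<pi> t"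
  using assms unfolding Kset_def Lset_def
  by (auto intro!: measurable_If_set sc_0)

lemma K_zero: "(\<lambda>w. 0) \<in> Kset F \<pi> t"
  unfolding Kset_def Lset_def by (auto intro: sc_0)

lemma Q_if:
  assumes mm: "market_model P F \<pi> T" and t: "t \<le> T" and z: "z \<in> Qset F \<pi> T t" and A: "A \<in> sets (F t)"
  shows "(\<lambda>w. if w \<in> A then z w else 0) \<in> Qset F \<pi> T t"
proof -
  obtain y where y1: "\<forall>s. t + 1 \<le> s \<and> s \<le> T + 1 \<longrightarrow> y s \<in> Lset F (s - 1)"
    and y2: "y (T + 1) = (\<lambda>w. 0)" and y3: "(\<lambda>w. z w - y (t + 1) w) \<in> Kset F \<pi> t"
    and y4: "\<forall>s. t + 1 \<le> s \<and> s \<le> T \<longrightarrow> (\<lambda>w. y s w - y (s + 1) w) \<in> Kset F \<pi> s"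
    and zL: "z \<in> Lset F t"
    using z unfolding Qset_def by blast
  define y' where "y' = (\<lambda>s w. if w \<in> A then y s w else 0)"
  have sp: "\<And>s. s \<le> T \<Longrightarrow> space (F s) = UNIV" using mm_space[OF mm] .
  have As: "\<And>s. t \<le> s \<Longrightarrow> s \<le> T \<Longrightarrow> A \<in> sets (F s)"
    using mm_mono[OF mm] A by blast
  show ?thesis unfolding Qset_def
  proof (intro CollectI conjI exI[of _ y'] allI impI)
    show "(\<lambda>w. if w \<in> A then z w else 0) \<in> Lset F t"
      using zL A sp[OF t] unfolding Lset_def by (auto intro!: measurable_If_set)
    fix s assume s: "t + 1 \<le> s \<and> s \<le> T + 1"
    then show "y' s \<in> Lset F (s - 1)"
      using y1 As[of "s-1"] sp[of "s-1"] unfolding Lset_def y'_def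
      by (auto intro!: measurable_If_set)
  next
    show "y' (T + 1) = (\<lambda>w. 0)" using y2 by (auto simp: y'_def)
  next
    have "(\<lambda>w. (if w \<in> A then z w else 0) - y' (t + 1) w) = (\<lambda>w. if w \<in> A then z w - y (t + 1) w else 0)"
      by (auto simp: y'_def)
    then show "(\<lambda>w. (if w \<in> A then z w else 0) - y' (t + 1) w) \<in> Kset F \<pi> t"
      using K_if[OF y3 A sp[OF t]] by simp
  next
    fix s assume s: "t + 1 \<le> s \<and> s \<le> T"
    have "(\<lambda>w. y' s w - y' (s + 1) w) = (\<lambda>w. if w \<in> A then y s w - y (s + 1) w else 0)"
      by (auto simp: y'_def)
    then show "(\<lambda>w. y' s w - y' (s + 1) w) \<in> Kset F \<pi> s"
      using K_if[OF y4[rule_format, OF s] As[of s] sp[of s]] s by simp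
  qed
qed

lemma K_Q:
  assumes "f \<in> Kset F \<pi> t"
  shows "f \<in> Qset F \<pi> T t"
  unfolding Qset_def
proof (intro CollectI conjI exI[of _ "\<lambda>s w. 0"] allI impI)
  show "f \<in> Lset F t" using assms unfolding Kset_def by auto
  show "(\<lambda>w. f w - 0) \<in> Kset F \<pi> t" using assms by simp
  fix s show "(\<lambda>w. 0::real^'b) \<in> Lset F (s - 1)" unfolding Lset_def by simp
qed (auto simp: K_zero)

lemma strat_meas:
  assumes mm: "market_model P F \<pi> T" and y: "y \<in> strategies F T" and "s \<le> t + 1" "t \<le> T"
  shows "y s \<in> borel_measurable (F t)"
proof -
  consider "s = 0" | "1 \<le> s \<and> s \<le> T" | "s = T + 1" using assms by linarith
  then show ?thesis
  proof cases
    case 1 then show ?thesis using y unfolding strategies_def by auto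
  next
    case 2 then have "y s \<in> borel_measurable (F (s - 1))" using y unfolding strategies_def Lset_def by auto
    moreover have "s - 1 \<le> t" using assms by linarith
    ultimately show ?thesis using mm_sub[OF mm _ \<open>t \<le> T\<close>] by blast
  next
    case 3 then show ?thesis using y unfolding strategies_def by auto
  qed
qed


lemma dir1:
  fixes F :: "nat \<Rightarrow> 'w::finite measure" and \<pi> :: "nat \<Rightarrow> 'w \<Rightarrow> 'd::finite \<Rightarrow> 'd \<Rightarrow> real"
    and \<xi> :: "nat \<Rightarrow> 'w \<Rightarrow> real^'d"
  assumes mm: "market_model P F \<pi> T" and xi: "american_option F T \<xi>"
    and Y: "Y \<in> Phi_ag F \<pi> T \<xi>" and x: "\<forall>ch \<in> mixed_stopping_times F T. \<forall>w. Y ch 0 w = x"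
  shows "\<exists>y \<in> Phi_ad F \<pi> T \<xi>. \<forall>w. y 0 w = x"
proof -
  define stop where "stop = (\<lambda>(t::nat) (s::nat) (w::'w). if s = t then 1 else (0::real))"
  have stopM: "stop t \<in> mixed_stopping_times F T" if "t \<le> T" for t
    unfolding mixed_stopping_times_def stop_def
  proof (intro CollectI conjI allI impI)
    fix s :: nat show "(\<lambda>w::'w. if s = t then 1 else 0::real) \<in> borel_measurable (F s)"
      by (cases "s = t") simp_all
  next
    fix w :: 'w show "(\<Sum>s\<le>T. if s = t then 1 else 0::real) = 1" using that by simp
  next
    fix s :: nat assume "T < s" then show "(\<lambda>w::'w. if s = t then 1 else 0::real) = (\<lambda>w. 0)" using that by auto
  qed auto
  have Yall: "(\<forall>ch \<in> mixed_stopping_times F T. Y ch \<in> strategies F T) \<and>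
      (\<forall>ch \<in> mixed_stopping_times F T. \<forall>t\<le>T.
          (\<lambda>w. Y ch t w - ch t w *\<^sub>R \<xi> t w - Y ch (t + 1) w) \<in> Kset F \<pi> t) \<and>
      (\<forall>ch \<in> mixed_stopping_times F T. \<forall>ch' \<in> mixed_stopping_times F T. \<forall>t\<le>T + 1. \<forall>w.
          (\<forall>s<t. ch s w = ch' s w) \<longrightarrow> Y ch t w = Y ch' t w)"
    using Y unfolding Phi_ag_def by (rule CollectD)
  have YS: "\<And>ch. ch \<in> mixed_stopping_times F T \<Longrightarrow> Y ch \<in> strategies F T"
    and YK: "\<And>ch t. ch \<in> mixed_stopping_times F T \<Longrightarrow> t \<le> T \<Longrightarrow>
          (\<lambda>w. Y ch t w - ch t w *\<^sub>R \<xi> t w - Y ch (t + 1) w) \<in> Kset F \<pi> t"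
    and YN: "\<And>ch ch' t w. ch \<in> mixed_stopping_times F T \<Longrightarrow> ch' \<in> mixed_stopping_times F T \<Longrightarrow> t \<le> T + 1 \<Longrightarrow>
          (\<forall>s<t. ch s w = ch' s w) \<Longrightarrow> Y ch t w = Y ch' t w"
    using Yall[THEN conjunct1] Yall[THEN conjunct2, THEN conjunct1] Yall[THEN conjunct2, THEN conjunct2]
    by blast+
  have sp: "\<And>s. s \<le> T \<Longrightarrow> space (F s) = UNIV" using mm_space[OF mm] .
  have mono: "\<And>s t. s \<le> t \<Longrightarrow> t \<le> T \<Longrightarrow> sets (F s) \<subseteq> sets (F t)"
    using mm_mono[OF mm] by blast
  define y where "y = Y (stop T)"
  have yS: "y \<in> strategies F T" unfolding y_def by (rule YS[OF stopM]) simp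
  have "y \<in> Phi_ad F \<pi> T \<xi>"
    unfolding Phi_ad_def
  proof (intro CollectI conjI yS ballI allI impI)
    fix \<tau> t assume \<tau>: "\<tau> \<in> stopping_times F T" and t: "t \<le> T"
    have \<tau>T: "\<And>w. \<tau> w \<le> T" and \<tau>s: "\<And>s. s \<le> T \<Longrightarrow> {w. \<tau> w = s} \<in> sets (F s)"
      using \<tau> unfolding stopping_times_def by auto
    define A where "A = {w. t < \<tau> w}"
    have "A = space (F t) - (\<Union>s\<in>{..t}. {w. \<tau> w = s})"
      unfolding A_def sp[OF t] by auto
    also have "\<dots> \<in> sets (F t)"
    proof (intro sets.Diff sets.top sets.finite_UN)
      fix s assume "s \<in> {..t}"
      then show "{w. \<tau> w = s} \<in> sets (F t)" using \<tau>s[of s] mono[of s t] t by auto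
    qed auto
    finally have A: "A \<in> sets (F t)" .
    have "(\<lambda>w. if t < \<tau> w then y t w - y (t + 1) w else 0)
        = (\<lambda>w. if w \<in> A then Y (stop T) t w - stop T t w *\<^sub>R \<xi> t w - Y (stop T) (t + 1) w else 0)"
    proof (rule ext)
      fix w show "(if t < \<tau> w then y t w - y (t + 1) w else 0)
        = (if w \<in> A then Y (stop T) t w - stop T t w *\<^sub>R \<xi> t w - Y (stop T) (t + 1) w else 0)"
      proof (cases "t < \<tau> w")
        case True
        then have "t \<noteq> T" using \<tau>T[of w] by auto
        then show ?thesis using True by (simp add: A_def y_def stop_def)
      next
        case False then show ?thesis by (simp add: A_def)
      qed
    qed
    also have "\<dots> \<in> Qset F \<pi> T t"
      by (rule K_Q, rule K_if[OF YK[OF stopM] A sp[OF t]]) (use t in auto)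
    finally show "(\<lambda>w. if t < \<tau> w then y t w - y (t + 1) w else 0) \<in> Qset F \<pi> T t" .
    define Z where "Z = Y (stop t)"
    have ZS: "Z \<in> strategies F T" unfolding Z_def by (rule YS[OF stopM[OF t]])
    have Zt: "\<And>w. Z t w = y t w" unfolding Z_def y_def
      by (rule YN[OF stopM[OF t] stopM]) (use t in \<open>auto simp: stop_def\<close>)
    have "(\<lambda>w. y t w - \<xi> t w) \<in> Qset F \<pi> T t"
      unfolding Qset_def
    proof (intro CollectI conjI exI[of _ Z] allI impI)
      show "(\<lambda>w. y t w - \<xi> t w) \<in> Lset F t"
        using strat_meas[OF mm yS _ t, of t] xi t unfolding Lset_def american_option_def
        by (auto intro!: borel_measurable_diff)
      fix s assume s: "t + 1 \<le> s \<and> s \<le> T + 1"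
      then show "Z s \<in> Lset F (s - 1)" unfolding Lset_def
        by (intro strat_meas[OF mm ZS]) auto
    next
      show "Z (T + 1) = (\<lambda>w. 0)" using ZS unfolding strategies_def by auto
    next
      have "(\<lambda>w. y t w - \<xi> t w - Z (t + 1) w) = (\<lambda>w. Z t w - stop t t w *\<^sub>R \<xi> t w - Z (t + 1) w)"
        by (simp add: Zt stop_def)
      also have "\<dots> \<in> Kset F \<pi> t" unfolding Z_def by (rule YK[OF stopM[OF t] t])
      finally show "(\<lambda>w. y t w - \<xi> t w - Z (t + 1) w) \<in> Kset F \<pi> t" .
    next
      fix s assume s: "t + 1 \<le> s \<and> s \<le> T"
      have "(\<lambda>w. Z s w - Z (s + 1) w) = (\<lambda>w. Z s w - stop t s w *\<^sub>R \<xi> s w - Z (s + 1) w)"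
        using s by (simp add: stop_def)
      also have "\<dots> \<in> Kset F \<pi> s" unfolding Z_def using s by (intro YK[OF stopM[OF t]]) auto
      finally show "(\<lambda>w. Z s w - Z (s + 1) w) \<in> Kset F \<pi> s" .
    qed
    from Q_if[OF mm t this \<tau>s[OF t]]
    show "(\<lambda>w. if \<tau> w = t then y t w - \<xi> t w else 0) \<in> Qset F \<pi> T t" by simp
  qed
  moreover have "\<forall>w. y 0 w = x" using x stopM[of T] unfolding y_def by auto
  ultimately show ?thesis by blast
qed


lemma dir2:
  fixes F :: "nat \<Rightarrow> 'w::finite measure" and \<pi> :: "nat \<Rightarrow> 'w \<Rightarrow> 'd::finite \<Rightarrow> 'd \<Rightarrow> real"
    and \<xi> :: "nat \<Rightarrow> 'w \<Rightarrow> real^'d"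
  assumes mm: "market_model P F \<pi> T" and xi: "american_option F T \<xi>"
    and y: "y \<in> Phi_ad F \<pi> T \<xi>" and x: "\<forall>w. y 0 w = x"
  shows "\<exists>Y \<in> Phi_ag F \<pi> T \<xi>. \<forall>ch \<in> mixed_stopping_times F T. \<forall>w. Y ch 0 w = x"
proof -
  have sp: "\<And>s. s \<le> T \<Longrightarrow> space (F s) = UNIV" using mm_space[OF mm] .
  have yall: "y \<in> strategies F T \<and> (\<forall>\<tau> \<in> stopping_times F T. \<forall>t\<le>T.
      (\<lambda>w. if t < \<tau> w then y t w - y (t + 1) w else 0) \<in> Qset F \<pi> T t \<and>
      (\<lambda>w. if \<tau> w = t then y t w - \<xi> t w else 0) \<in> Qset F \<pi> T t)"
    using y unfolding Phi_ad_def by (rule CollectD)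
  have yS: "y \<in> strategies F T" using yall by blast
  have ys: "\<And>t. T + 1 \<le> t \<Longrightarrow> y t = (\<lambda>w. 0)" using yS unfolding strategies_def by blast
  have cst: "(\<lambda>w::'w. s) \<in> stopping_times F T" if "s \<le> T" for s
    unfolding stopping_times_def
  proof (intro CollectI conjI allI impI)
    fix t assume "t \<le> T"
    show "{w::'w. s = t} \<in> sets (F t)"
    proof (cases "s = t")
      case True then have "{w::'w. s = t} = space (F t)" using sp \<open>t \<le> T\<close> by simp
      then show ?thesis by simp
    next
      case False then show ?thesis by simp
    qed
  qed (use that in simp)
  have Qxi: "(\<lambda>w. y s w - \<xi> s w) \<in> Qset F \<pi> T s" if "s \<le> T" for s
    using yall[THEN conjunct2, rule_format, OF cst[OF that] that, THEN conjunct2] by simp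
  have Qy: "(\<lambda>w. y s w - y (s + 1) w) \<in> Qset F \<pi> T s" if "s < T" for s
  proof -
    have "(\<lambda>w::'w. if s < T then y s w - y (s + 1) w else 0) \<in> Qset F \<pi> T s"
      using yall[THEN conjunct2, rule_format, OF cst[of T], of s] that by simp
    then show ?thesis using that by simp
  qed
  have EU: "\<forall>s. \<exists>u. s \<le> T \<longrightarrow> ((\<forall>r. s + 1 \<le> r \<and> r \<le> T + 1 \<longrightarrow> u r \<in> Lset F (r - 1)) \<and>
      u (T + 1) = (\<lambda>w. 0) \<and> (\<lambda>w. y s w - \<xi> s w - u (s + 1) w) \<in> Kset F \<pi> s \<and>
      (\<forall>r. s + 1 \<le> r \<and> r \<le> T \<longrightarrow> (\<lambda>w. u r w - u (r + 1) w) \<in> Kset F \<pi> r))"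
  proof
    fix s show "\<exists>u. s \<le> T \<longrightarrow> ((\<forall>r. s + 1 \<le> r \<and> r \<le> T + 1 \<longrightarrow> u r \<in> Lset F (r - 1)) \<and>
      u (T + 1) = (\<lambda>w. 0) \<and> (\<lambda>w. y s w - \<xi> s w - u (s + 1) w) \<in> Kset F \<pi> s \<and>
      (\<forall>r. s + 1 \<le> r \<and> r \<le> T \<longrightarrow> (\<lambda>w. u r w - u (r + 1) w) \<in> Kset F \<pi> r))"
    proof (cases "s \<le> T")
      case True
      then show ?thesis using Qxi[OF True] unfolding Qset_def mem_Collect_eq by blast
    qed simp
  qed
  obtain U where U: "\<forall>s. s \<le> T \<longrightarrow> ((\<forall>r. s + 1 \<le> r \<and> r \<le> T + 1 \<longrightarrow> U s r \<in> Lset F (r - 1)) \<and>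
      U s (T + 1) = (\<lambda>w. 0) \<and> (\<lambda>w. y s w - \<xi> s w - U s (s + 1) w) \<in> Kset F \<pi> s \<and>
      (\<forall>r. s + 1 \<le> r \<and> r \<le> T \<longrightarrow> (\<lambda>w. U s r w - U s (r + 1) w) \<in> Kset F \<pi> r))"
    using choice[OF EU] by blast
  have EV: "\<forall>s. \<exists>u. s < T \<longrightarrow> ((\<forall>r. s + 1 \<le> r \<and> r \<le> T + 1 \<longrightarrow> u r \<in> Lset F (r - 1)) \<and>
      u (T + 1) = (\<lambda>w. 0) \<and> (\<lambda>w. y s w - y (s + 1) w - u (s + 1) w) \<in> Kset F \<pi> s \<and>
      (\<forall>r. s + 1 \<le> r \<and> r \<le> T \<longrightarrow> (\<lambda>w. u r w - u (r + 1) w) \<in> Kset F \<pi> r))"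
  proof
    fix s show "\<exists>u. s < T \<longrightarrow> ((\<forall>r. s + 1 \<le> r \<and> r \<le> T + 1 \<longrightarrow> u r \<in> Lset F (r - 1)) \<and>
      u (T + 1) = (\<lambda>w. 0) \<and> (\<lambda>w. y s w - y (s + 1) w - u (s + 1) w) \<in> Kset F \<pi> s \<and>
      (\<forall>r. s + 1 \<le> r \<and> r \<le> T \<longrightarrow> (\<lambda>w. u r w - u (r + 1) w) \<in> Kset F \<pi> r))"
    proof (cases "s < T")
      case True
      then show ?thesis using Qy[OF True] unfolding Qset_def mem_Collect_eq by blast
    qed simp
  qed
  obtain V0 where V0: "\<forall>s. s < T \<longrightarrow> ((\<forall>r. s + 1 \<le> r \<and> r \<le> T + 1 \<longrightarrow> V0 s r \<in> Lset F (r - 1)) \<and>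
      V0 s (T + 1) = (\<lambda>w. 0) \<and> (\<lambda>w. y s w - y (s + 1) w - V0 s (s + 1) w) \<in> Kset F \<pi> s \<and>
      (\<forall>r. s + 1 \<le> r \<and> r \<le> T \<longrightarrow> (\<lambda>w. V0 s r w - V0 s (r + 1) w) \<in> Kset F \<pi> r))"
    using choice[OF EV] by blast
  define V where "V = (\<lambda>s. if s < T then V0 s else (\<lambda>r (w::'w). 0::real^'d))"
  have U1: "\<And>s r. s \<le> T \<Longrightarrow> s + 1 \<le> r \<Longrightarrow> r \<le> T + 1 \<Longrightarrow> U s r \<in> borel_measurable (F (r - 1))"
    using U unfolding Lset_def by simp
  have U2: "\<And>s. s \<le> T \<Longrightarrow> U s (T + 1) = (\<lambda>w. 0)" using U by blast
  have U3: "\<And>s. s \<le> T \<Longrightarrow> (\<lambda>w. y s w - \<xi> s w - U s (s + 1) w) \<in> Kset F \<pi> s" using U by blast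
  have U4: "\<And>s r. s \<le> T \<Longrightarrow> s + 1 \<le> r \<Longrightarrow> r \<le> T \<Longrightarrow> (\<lambda>w. U s r w - U s (r + 1) w) \<in> Kset F \<pi> r"
    using U by blast
  have VV: "\<And>s. s < T \<Longrightarrow> V s = V0 s" by (simp add: V_def)
  have V1: "V s r \<in> borel_measurable (F (r - 1))" if "s < T" "s + 1 \<le> r" "r \<le> T + 1" for s r
    using V0[rule_format, OF that(1)] that unfolding VV[OF that(1)] Lset_def by blast
  have V2: "V s (T + 1) = (\<lambda>w. 0)" for s
  proof (cases "s < T")
    case True then show ?thesis using V0[rule_format, OF True] unfolding VV[OF True] by blast
  qed (simp add: V_def)
  have V3: "(\<lambda>w. y s w - y (s + 1) w - V s (s + 1) w) \<in> Kset F \<pi> s" if "s < T" for s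
    using V0[rule_format, OF that(1)] that unfolding VV[OF that(1)] by blast
  have V4: "(\<lambda>w. V s r w - V s (r + 1) w) \<in> Kset F \<pi> r" if "s < T" "s + 1 \<le> r" "r \<le> T" for s r
    using V0[rule_format, OF that(1)] that unfolding VV[OF that(1)] by blast
  define M where "M = (\<lambda>(ch::nat \<Rightarrow> 'w \<Rightarrow> real) r w. 1 - (\<Sum>s<r. ch s w))"
  define Yc where "Yc = (\<lambda>ch t w. M ch t w *\<^sub>R y t w +
      (\<Sum>s<t. ch s w *\<^sub>R U s t w + M ch (s + 1) w *\<^sub>R V s t w))"
  define Y where "Y = (\<lambda>ch t. if t \<le> T then Yc ch t else (\<lambda>w::'w. 0::real^'d))"
  have Mcong: "M ch r w = M ch' r w" if "\<forall>s<t. ch s w = ch' s w" "r \<le> t" for ch ch' r t w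
    unfolding M_def using that by (auto intro!: sum.cong)
  have YN: "Y ch t w = Y ch' t w" if "\<forall>s<t. ch s w = ch' s w" for ch ch' t w
  proof (cases "t \<le> T")
    case True
    have "Yc ch t w = Yc ch' t w"
    proof -
      have M1: "M ch t w = M ch' t w" by (rule Mcong[where ch=ch and ch'=ch' and w=w and t=t, OF that]) simp
      have M2: "\<And>s. s < t \<Longrightarrow> M ch (s+1) w = M ch' (s+1) w" by (rule Mcong[where ch=ch and ch'=ch' and w=w and t=t, OF that]) simp
      show ?thesis unfolding Yc_def using M1 M2 that by (auto intro!: sum.cong)
    qed
    then show ?thesis using True unfolding Y_def by simp
  qed (simp add: Y_def)
  have chprops: "Y ch \<in> strategies F T \<and> (\<forall>t\<le>T. (\<lambda>w. Y ch t w - ch t w *\<^sub>R \<xi> t w - Y ch (t + 1) w) \<in> Kset F \<pi> t)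
      \<and> (\<forall>w. Y ch 0 w = x)"
    if ch: "ch \<in> mixed_stopping_times F T" for ch
  proof -
    have chm: "\<And>t. t \<le> T \<Longrightarrow> ch t \<in> borel_measurable (F t)"
      and ch0: "\<And>t w. t \<le> T \<Longrightarrow> 0 \<le> ch t w"
      and chs: "\<And>w. (\<Sum>t\<le>T. ch t w) = 1"
      using ch unfolding mixed_stopping_times_def by blast+
    have Mnn: "0 \<le> M ch r w" if "r \<le> T + 1" for r w
    proof -
      have "(\<Sum>s<r. ch s w) \<le> (\<Sum>s<T+1. ch s w)"
        by (rule sum_mono2) (use that ch0 in auto)
      also have "\<dots> = 1" using chs[of w] by (simp add: lessThan_Suc_atMost)
      finally show ?thesis unfolding M_def by simp
    qed
    have MT: "M ch (T + 1) w = 0" for w using chs[of w] by (simp add: M_def lessThan_Suc_atMost)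
    have Mmeas: "(\<lambda>w. M ch r w) \<in> borel_measurable (F k)" if "r \<le> k + 1" "k \<le> T" for r k
      unfolding M_def
    proof (intro borel_measurable_diff borel_measurable_const borel_measurable_sum)
      fix s assume "s \<in> {..<r}"
      then have "s \<le> k" using that by auto
      then show "ch s \<in> borel_measurable (F k)" using mm_sub[OF mm _ \<open>k \<le> T\<close> chm] that by auto
    qed
    have YcT: "Yc ch (T + 1) = (\<lambda>w. 0)"
      unfolding Yc_def using ys[of "T+1"] U2 V2 by (auto simp: MT intro!: ext sum.neutral)
    have YYc: "\<And>t. t \<le> T + 1 \<Longrightarrow> Y ch t = Yc ch t"
      using YcT unfolding Y_def by (auto simp: le_Suc_eq)
    have Ycm: "Yc ch t \<in> borel_measurable (F (t - 1))" if "1 \<le> t" "t \<le> T" for t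
    proof -
      have k: "t - 1 \<le> T" "t \<le> (t - 1) + 1" using that by auto
      show ?thesis unfolding Yc_def
      proof (intro borel_measurable_add borel_measurable_scaleR borel_measurable_sum Mmeas[OF k(2) k(1)])
        show "y t \<in> borel_measurable (F (t - 1))" using strat_meas[OF mm yS k(2) k(1)] .
      next
        fix s assume "s \<in> {..<t}"
        then have s: "s < t" by simp
        show "(\<lambda>w. ch s w) \<in> borel_measurable (F (t - 1))"
          using mm_sub[OF mm _ k(1) chm, of s] s that by auto
        show "U s t \<in> borel_measurable (F (t - 1))" using U1[of s t] s that by auto
        show "V s t \<in> borel_measurable (F (t - 1))" using V1[of s t] s that by auto
        show "(\<lambda>w. M ch (s + 1) w) \<in> borel_measurable (F (t - 1))" using Mmeas[of "s+1" "t-1"] s that by auto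
      qed
    qed
    have YS: "Y ch \<in> strategies F T"
      unfolding strategies_def
    proof (intro CollectI conjI allI impI)
      show "\<exists>c. Y ch 0 = (\<lambda>w. c)"
        using yS unfolding strategies_def Y_def Yc_def M_def by auto
    next
      fix t assume "1 \<le> t \<and> t \<le> T"
      then show "Y ch t \<in> Lset F (t - 1)" using Ycm[of t] unfolding Lset_def Y_def by auto
    next
      fix t assume "T + 1 \<le> t" then show "Y ch t = (\<lambda>w. 0)" unfolding Y_def by auto
    qed
    have YK: "(\<lambda>w. Y ch t w - ch t w *\<^sub>R \<xi> t w - Y ch (t + 1) w) \<in> Kset F \<pi> t" if t: "t \<le> T" for t
    proof -
      have meas: "(\<lambda>w. Y ch t w - ch t w *\<^sub>R \<xi> t w - Y ch (t + 1) w) \<in> borel_measurable (F t)"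
        using strat_meas[OF mm YS _ t, of t] strat_meas[OF mm YS _ t, of "t+1"] chm[OF t] xi t
        unfolding american_option_def Lset_def
        by (intro borel_measurable_diff borel_measurable_scaleR) auto
      have cone: "Y ch t w - ch t w *\<^sub>R \<xi> t w - Y ch (t + 1) w \<in> solv_cone \<pi> t w" for w
      proof -
        have Mst: "M ch (Suc t) w = M ch t w - ch t w" by (simp add: M_def)
        have sd: "(\<Sum>s<t. ch s w *\<^sub>R (U s t w - U s (t+1) w) + M ch (s+1) w *\<^sub>R (V s t w - V s (t+1) w))
          = (\<Sum>s<t. ch s w *\<^sub>R U s t w + M ch (s+1) w *\<^sub>R V s t w)
          - (\<Sum>s<t. ch s w *\<^sub>R U s (t+1) w + M ch (s+1) w *\<^sub>R V s (t+1) w)"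
          by (simp add: sum_subtractf[symmetric] scaleR_diff_right algebra_simps)
        have Y1: "Y ch t w = Yc ch t w" and Y2: "Y ch (t + 1) w = Yc ch (t + 1) w"
          using YYc t by simp_all
        have eq: "Y ch t w - ch t w *\<^sub>R \<xi> t w - Y ch (t + 1) w
          = ch t w *\<^sub>R (y t w - \<xi> t w - U t (t+1) w) + M ch (t+1) w *\<^sub>R (y t w - y (t+1) w - V t (t+1) w)
            + (\<Sum>s<t. ch s w *\<^sub>R (U s t w - U s (t+1) w) + M ch (s+1) w *\<^sub>R (V s t w - V s (t+1) w))"
          unfolding sd Y1 Y2
          by (simp add: Yc_def Mst algebra_simps scaleR_diff_left scaleR_diff_right)
        have K: "f \<in> Kset F \<pi> r \<Longrightarrow> f w \<in> solv_cone \<pi> r w" for f r unfolding Kset_def by blast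
        have c1: "ch t w *\<^sub>R (y t w - \<xi> t w - U t (t+1) w) \<in> solv_cone \<pi> t w"
          by (rule sc_mul[OF K[OF U3[OF t]] ch0[OF t]])
        have c2: "M ch (t+1) w *\<^sub>R (y t w - y (t+1) w - V t (t+1) w) \<in> solv_cone \<pi> t w"
        proof (cases "t < T")
          case True then show ?thesis by (intro sc_mul[OF K[OF V3[OF True]]] Mnn) auto
        next
          case False then have "t = T" using t by simp
          then show ?thesis using MT sc_0 by simp
        qed
        have c3: "(\<Sum>s<t. ch s w *\<^sub>R (U s t w - U s (t+1) w) + M ch (s+1) w *\<^sub>R (V s t w - V s (t+1) w)) \<in> solv_cone \<pi> t w"
        proof (intro sc_sum sc_add sc_mul)
          fix s assume "s \<in> {..<t}" then have s: "s < t" by simp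
          show "U s t w - U s (t+1) w \<in> solv_cone \<pi> t w" using K[OF U4[of s t]] s t by simp
          show "V s t w - V s (t+1) w \<in> solv_cone \<pi> t w" using K[OF V4[of s t]] s t by simp
          show "0 \<le> ch s w" using ch0[of s] s t by simp
          show "0 \<le> M ch (s+1) w" using Mnn[of "s+1"] s t by simp
        qed simp
        show ?thesis unfolding eq by (intro sc_add c1 c2 c3)
      qed
      show ?thesis unfolding Kset_def Lset_def using meas cone by blast
    qed
    have "\<forall>w. Y ch 0 w = x" using x unfolding Y_def Yc_def M_def by simp
    then show ?thesis using YS YK by blast
  qed
  have "Y \<in> Phi_ag F \<pi> T \<xi>" unfolding Phi_ag_def
    using chprops YN by blast
  then show ?thesis using chprops by blast
qed


theorem proposition4p4:
  fixes P :: "'w::finite \<Rightarrow> real"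
    and F :: "nat \<Rightarrow> 'w measure"
    and \<pi> :: "nat \<Rightarrow> 'w \<Rightarrow> 'd::finite \<Rightarrow> 'd \<Rightarrow> real"
    and T :: nat
    and \<xi> :: "nat \<Rightarrow> 'w \<Rightarrow> real^'d"
  assumes "market_model P F \<pi> T"
    and "no_arbitrage F \<pi> T"
    and "american_option F T \<xi>"
  shows "{x :: real^'d. \<exists>Y \<in> Phi_ag F \<pi> T \<xi>. \<forall>ch \<in> mixed_stopping_times F T. \<forall>w. Y ch 0 w = x}
       = {x :: real^'d. \<exists>y \<in> Phi_ad F \<pi> T \<xi>. \<forall>w. y 0 w = x}"
proof (intro set_eqI iffI; unfold mem_Collect_eq)
  fix x assume "\<exists>Y \<in> Phi_ag F \<pi> T \<xi>. \<forall>ch \<in> mixed_stopping_times F T. \<forall>w. Y ch 0 w = x"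
  then obtain Y where "Y \<in> Phi_ag F \<pi> T \<xi>" "\<forall>ch \<in> mixed_stopping_times F T. \<forall>w. Y ch 0 w = x" by blast
  then show "\<exists>y \<in> Phi_ad F \<pi> T \<xi>. \<forall>w. y 0 w = x" using dir1[OF assms(1,3)] by blast
next
  fix x assume "\<exists>y \<in> Phi_ad F \<pi> T \<xi>. \<forall>w. y 0 w = x"
  then obtain y where "y \<in> Phi_ad F \<pi> T \<xi>" "\<forall>w. y 0 w = x" by blast
  then show "\<exists>Y \<in> Phi_ag F \<pi> T \<xi>. \<forall>ch \<in> mixed_stopping_times F T. \<forall>w. Y ch 0 w = x"
    using dir2[OF assms(1,3)] by blast
qed

end
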